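(* Let $m\ge 2$ and let $M=(\{0,\dots,m-1\},\{a,b,c,d\},\delta_M,0,\{0\})$ be the DFA with $\delta_M(0,a)=m-1$ and $\delta_M(i,a)=i-1$ for $1\le i\le m-1$; $\delta_M(0,b)=1$ and $\delta_M(i,b)=i$ for $1\le i\le m-1$; $\delta_M(0,c)=1$, $\delta_M(1,c)=0$, and $\delta_M(j,c)=j$ for $2\le j\le m-1$; $\delta_M(i,d)=i$ for all $i$. Then the minimal complete DFA accepting $L(M)^R$ has exactly $2^m$ states.
   Context: For a language $L$, $L^R=\{w^R : w\in L\}$ where $w^R$ is the reversal of the word $w$. DFAs are complete deterministic finite automata $(Q,\Sigma,\delta,s,F)$. *)

theory Defs
  imports Main
begin

datatype letter = LA | LB | LC | LD

text \<open>A DFA over an input type 'a (the alphabet is the whole type 'a).\<close>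
record ('s, 'a) dfa =
  states :: "'s set"
  delta  :: "'s \<Rightarrow> 'a \<Rightarrow> 's"
  start  :: 's
  finals :: "'s set"

definition dfa_wf :: "('s, 'a) dfa \<Rightarrow> bool" where
  "dfa_wf A \<longleftrightarrow> finite (states A) \<and> start A \<in> states A \<and> finals A \<subseteq> states A
     \<and> (\<forall>q \<in> states A. \<forall>x. delta A q x \<in> states A)"

definition delta_hat :: "('s, 'a) dfa \<Rightarrow> 's \<Rightarrow> 'a list \<Rightarrow> 's" where
  "delta_hat A q w = foldl (delta A) q w"

definition lang :: "('s, 'a) dfa \<Rightarrow> 'a list set" where
  "lang A = {w. delta_hat A (start A) w \<in> finals A}"

definition rev_lang :: "'a list set \<Rightarrow> 'a list set" where
  "rev_lang L = rev ` L"

definition deltaM :: "nat \<Rightarrow> nat \<Rightarrow> letter \<Rightarrow> nat" where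
  "deltaM m i x = (case x of
      LA \<Rightarrow> (if i = 0 then m - 1 else i - 1)
    | LB \<Rightarrow> (if i = 0 then 1 else i)
    | LC \<Rightarrow> (if i = 0 then 1 else if i = 1 then 0 else i)
    | LD \<Rightarrow> i)"

definition M :: "nat \<Rightarrow> (nat, letter) dfa" where
  "M m = \<lparr> states = {0..<m}, delta = deltaM m, start = 0, finals = {0} \<rparr>"

end

theory Submission
  imports Defs "HOL-Library.Countable"
begin

definition Tr :: "nat \<Rightarrow> nat set \<Rightarrow> letter \<Rightarrow> nat set" where
  "Tr m X x = {i. i < m \<and> deltaM m i x \<in> X}"

definition P :: "nat \<Rightarrow> letter list \<Rightarrow> nat set" where
  "P m w = foldl (Tr m) {0} w"

lemma P_snoc: "P m (w @ [x]) = Tr m (P m w) x"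
  by (simp add: P_def)

lemma deltaM_lt: "m \<ge> 2 \<Longrightarrow> i < m \<Longrightarrow> deltaM m i x < m"
  by (cases x) (auto simp: deltaM_def)

lemma foldl_delta_lt: "m \<ge> 2 \<Longrightarrow> i < m \<Longrightarrow> foldl (deltaM m) i v < m"
  by (induction v arbitrary: i) (auto simp: deltaM_lt)

lemma Tr_sub: "Tr m X x \<subseteq> {0..<m}"
  by (auto simp: Tr_def)

lemma foldl_Tr: "m \<ge> 2 \<Longrightarrow> X \<subseteq> {0..<m} \<Longrightarrow>
   foldl (Tr m) X w = {i. i < m \<and> foldl (deltaM m) i (rev w) \<in> X}"
proof (induction w arbitrary: X)
  case Nil then show ?case by auto
next
  case (Cons x w)
  have "foldl (Tr m) X (x # w) = foldl (Tr m) (Tr m X x) w" by simp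
  also have "\<dots> = {i. i < m \<and> foldl (deltaM m) i (rev w) \<in> Tr m X x}"
    using Cons.IH[OF Cons.prems(1) Tr_sub] .
  also have "\<dots> = {i. i < m \<and> foldl (deltaM m) i (rev (x # w)) \<in> X}"
    using foldl_delta_lt[OF Cons.prems(1)] by (auto simp: Tr_def)
  finally show ?case .
qed

lemma P_sub: "P m w \<subseteq> {0..<m} \<or> w = []"
  by (cases w rule: rev_cases) (auto simp: P_snoc Tr_sub)

lemma mem_rev_lang: "m \<ge> 2 \<Longrightarrow> w \<in> rev_lang (lang (M m)) \<longleftrightarrow> 0 \<in> P m w"
proof -
  assume m: "m \<ge> 2"
  have "w \<in> rev_lang (lang (M m)) \<longleftrightarrow> rev w \<in> lang (M m)"
    unfolding rev_lang_def by (metis image_iff rev_rev_ident)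
  also have "\<dots> \<longleftrightarrow> foldl (deltaM m) 0 (rev w) = 0"
    by (simp add: lang_def delta_hat_def M_def)
  also have "\<dots> \<longleftrightarrow> 0 \<in> P m w"
    unfolding P_def using foldl_Tr[OF m, of "{0}" w] m by auto
  finally show ?thesis .
qed

lemma Tr_LA: "m \<ge> 2 \<Longrightarrow> X \<subseteq> {0..<m-1} \<Longrightarrow> Tr m X LA = Suc ` X"
  apply (rule set_eqI)
  apply (auto simp: Tr_def deltaM_def image_iff split: if_splits)
   apply (metis Suc_pred)
  done

lemma Tr_LB: "Tr m Y LB = {i. i < m \<and> (if i = 0 then 1 \<in> Y else i \<in> Y)}"
  by (auto simp: Tr_def deltaM_def)

lemma Tr_LC: "Tr m Y LC = {i. i < m \<and> (if i = 0 then 1 \<in> Y else if i = 1 then 0 \<in> Y else i \<in> Y)}"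
  by (auto simp: Tr_def deltaM_def)

lemma reach0:
  assumes m: "m \<ge> 2"
  shows "n \<le> m - 1 \<Longrightarrow> T \<subseteq> {0..<n} \<Longrightarrow> \<exists>w. P m w = insert 0 (Suc ` T)"
proof (induction n arbitrary: T)
  case 0
  then have "T = {}" by auto
  then show ?case by (intro exI[of _ "[]"]) (simp add: P_def)
next
  case (Suc n)
  define T' where "T' = {i. Suc i \<in> T}"
  have T': "T' \<subseteq> {0..<n}" using Suc.prems by (auto simp: T'_def)
  obtain w where w: "P m w = insert 0 (Suc ` T')"
    using Suc.IH[OF _ T'] Suc.prems by auto
  have Xs: "insert 0 (Suc ` T') \<subseteq> {0..<m-1}" using T' Suc.prems by auto
  have A: "P m (w @ [LA]) = Suc ` insert 0 (Suc ` T')"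
    using Tr_LA[OF m Xs] w by (simp add: P_snoc)
  have Ssub: "Suc ` insert 0 (Suc ` T') \<subseteq> {0..<m}" using Xs by auto
  show ?case
  proof (cases "0 \<in> T")
    case True
    have "P m (w @ [LA, LB]) = insert 0 (Suc ` T)"
      using A Ssub True Suc.prems unfolding P_snoc[of m "w @ [LA]" LB, simplified]
      apply (simp add: Tr_LB)
      apply (rule set_eqI)
      apply (auto simp: T'_def image_iff)
       apply (metis Suc_pred gr0I)
      done
    then show ?thesis by blast
  next
    case False
    have "P m (w @ [LA, LC]) = insert 0 (Suc ` T)"
      using A Ssub False Suc.prems unfolding P_snoc[of m "w @ [LA]" LC, simplified]
      apply (simp add: Tr_LC)
      apply (rule set_eqI)
      apply (auto simp: T'_def image_iff)
       apply (metis Suc_pred gr0I)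
      done
    then show ?thesis by blast
  qed
qed

lemma shift:
  assumes m: "m \<ge> 2"
  shows "Y \<subseteq> {0..<m-k} \<Longrightarrow> P m w = Y \<Longrightarrow> \<exists>w'. P m w' = (\<lambda>i. i + k) ` Y"
proof (induction k arbitrary: Y w)
  case 0 then show ?case by (intro exI[of _ w]) simp
next
  case (Suc k)
  have Y1: "Y \<subseteq> {0..<m-1}" using Suc.prems(1) by auto
  have s1: "P m (w @ [LA]) = Suc ` Y"
    unfolding P_snoc Suc.prems(2) by (rule Tr_LA[OF m Y1])
  have s2: "Suc ` Y \<subseteq> {0..<m-k}" using Suc.prems(1) by auto
  obtain w' where w': "P m w' = (\<lambda>i. i + k) ` Suc ` Y"
    using Suc.IH[OF s2 s1] by blast
  have "(\<lambda>i. i + k) ` Suc ` Y = (\<lambda>i. i + Suc k) ` Y" by (simp add: image_image)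
  then show ?case using w' by auto
qed

lemma reach_all:
  assumes m: "m \<ge> 2" and S: "S \<subseteq> {0..<m}"
  shows "\<exists>w. P m w = S"
proof (cases "S = {}")
  case True
  have "P m [LB] = {}" by (auto simp: P_def Tr_LB)
  then show ?thesis using True by blast
next
  case False
  have fin: "finite S" using S finite_subset by blast
  define s where "s = Min S"
  have sS: "s \<in> S" using Min_in[OF fin False] s_def by simp
  have smin: "\<And>j. j \<in> S \<Longrightarrow> s \<le> j" using fin s_def by simp
  define X where "X = {i. i + s \<in> S}"
  have X0: "0 \<in> X" using sS by (simp add: X_def)
  have Xsub: "X \<subseteq> {0..<m-s}" using S by (auto simp: X_def)
  have SX: "S = (\<lambda>i. i + s) ` X"
    apply (rule set_eqI)
    apply (auto simp: X_def image_iff)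
    by (metis le_add_diff_inverse2 smin)
  define T where "T = {i. Suc i \<in> X}"
  have XT: "X = insert 0 (Suc ` T)"
    using X0 by (auto simp: T_def image_iff) (metis not0_implies_Suc)
  have Tsub: "T \<subseteq> {0..<m-1}" using Xsub by (auto simp: T_def)
  obtain w where "P m w = X" using reach0[OF m _ Tsub] XT by auto
  then show ?thesis using shift[OF m Xsub] SX by metis
qed

lemma rep_LA: "k \<le> j \<Longrightarrow> foldl (deltaM m) j (replicate k LA) = j - k"
  by (induction k arbitrary: j) (auto simp: deltaM_def)

lemma hit: "m \<ge> 2 \<Longrightarrow> i < m \<Longrightarrow> foldl (deltaM m) 0 (LA # replicate (m-1-i) LA) = i"
  by (simp add: rep_LA deltaM_def)

lemma P_append: "m \<ge> 2 \<Longrightarrow> 0 \<in> P m (w @ u) \<longleftrightarrow> foldl (deltaM m) 0 (rev u) \<in> P m w"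
proof -
  assume m: "m \<ge> 2"
  have sub: "P m w \<subseteq> {0..<m}" using P_sub[of m w] m by (auto simp: P_def)
  have "P m (w @ u) = foldl (Tr m) (P m w) u" by (simp add: P_def)
  then show ?thesis using foldl_Tr[OF m sub, of u] m by auto
qed

theorem mainTheorem7:
  fixes m :: nat
  assumes "m \<ge> 2"
  shows "(\<exists>A :: (nat, letter) dfa. dfa_wf A \<and> lang A = rev_lang (lang (M m))
            \<and> card (states A) = 2 ^ m)
       \<and> (\<forall>A :: ('s, letter) dfa. dfa_wf A \<and> lang A = rev_lang (lang (M m))
            \<longrightarrow> 2 ^ m \<le> card (states A))"
proof
  have m: "m \<ge> 2" by fact
  define enc :: "nat set \<Rightarrow> nat" where "enc = (\<lambda>S. to_nat (sorted_list_of_set S))"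
  define U where "U = Pow {0..<m}"
  have inj: "inj_on enc U"
  proof (rule inj_onI)
    fix S1 S2 assume "S1 \<in> U" "S2 \<in> U" "enc S1 = enc S2"
    then have f: "finite S1" "finite S2" and e: "sorted_list_of_set S1 = sorted_list_of_set S2"
      by (auto simp: U_def enc_def intro: finite_subset)
    have "set (sorted_list_of_set S1) = set (sorted_list_of_set S2)" using e by simp
    then show "S1 = S2" using f by simp
  qed
  define dec where "dec = inv_into U enc"
  define A :: "(nat, letter) dfa" where
    "A = \<lparr> states = enc ` U, delta = (\<lambda>q x. enc (Tr m (dec q) x)), start = enc {0},
          finals = enc ` {S \<in> U. 0 \<in> S} \<rparr>"
  have TrU: "Tr m X x \<in> U" for X x using Tr_sub by (simp add: U_def)
  have run: "X \<in> U \<Longrightarrow> foldl (delta A) (enc X) w = enc (foldl (Tr m) X w)" for X w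
  proof (induction w arbitrary: X)
    case Nil then show ?case by simp
  next
    case (Cons x w)
    have "delta A (enc X) x = enc (Tr m X x)"
      using Cons.prems inj by (simp add: A_def dec_def)
    then show ?case using Cons.IH[OF TrU] by simp
  qed
  have U0: "{0} \<in> U" using m by (auto simp: U_def)
  have PU: "P m w \<in> U" for w
    using P_sub[of m w] U0 by (auto simp: U_def P_def)
  have "dfa_wf A"
    unfolding dfa_wf_def A_def using U0 TrU by (auto simp: U_def)
  moreover have "lang A = rev_lang (lang (M m))"
  proof (rule set_eqI)
    fix w
    have "w \<in> lang A \<longleftrightarrow> enc (P m w) \<in> enc ` {S \<in> U. 0 \<in> S}"
      using run[OF U0, of w] by (simp add: lang_def delta_hat_def A_def P_def)
    also have "\<dots> \<longleftrightarrow> 0 \<in> P m w"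
      using inj PU by (auto simp: inj_on_def)
    finally show "w \<in> lang A \<longleftrightarrow> w \<in> rev_lang (lang (M m))" using mem_rev_lang[OF m] by simp
  qed
  moreover have "card (states A) = 2 ^ m"
    using card_image[OF inj] by (simp add: A_def U_def card_Pow)
  ultimately show "\<exists>A :: (nat, letter) dfa. dfa_wf A \<and> lang A = rev_lang (lang (M m))
            \<and> card (states A) = 2 ^ m" by blast
next
  have m: "m \<ge> 2" by fact
  show "\<forall>A :: ('s, letter) dfa. dfa_wf A \<and> lang A = rev_lang (lang (M m))
            \<longrightarrow> 2 ^ m \<le> card (states A)"
  proof (intro allI impI)
    fix A :: "('s, letter) dfa"
    assume H: "dfa_wf A \<and> lang A = rev_lang (lang (M m))"
    define U where "U = Pow {0..<m}"
    define wd where "wd = (\<lambda>S. SOME w. P m w = S)"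
    have wdP: "S \<in> U \<Longrightarrow> P m (wd S) = S" for S
      unfolding wd_def U_def
    proof (rule someI_ex)
      assume "S \<in> Pow {0..<m}"
      then show "\<exists>w. P m w = S" using reach_all[OF m] by blast
    qed
    define f where "f = (\<lambda>S. delta_hat A (start A) (wd S))"
    have closed: "q \<in> states A \<Longrightarrow> foldl (delta A) q w \<in> states A" for q w
      using H by (induction w arbitrary: q) (auto simp: dfa_wf_def)
    have fin: "finite (states A)" using H by (simp add: dfa_wf_def)
    have fS: "f ` U \<subseteq> states A"
      using H closed by (auto simp: f_def delta_hat_def dfa_wf_def)
    have acc: "0 \<in> P m w \<longleftrightarrow> foldl (delta A) (start A) w \<in> finals A" for w
    proof -
      have "w \<in> lang A \<longleftrightarrow> 0 \<in> P m w" using H mem_rev_lang[OF m, of w] by simp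
      then show ?thesis by (simp add: lang_def delta_hat_def)
    qed
    have "inj_on f U"
    proof (rule inj_onI)
      fix S1 S2 assume S1: "S1 \<in> U" and S2: "S2 \<in> U" and eq: "f S1 = f S2"
      have "i \<in> S1 \<longleftrightarrow> i \<in> S2" if i: "i < m" for i
      proof -
        define u where "u = rev (LA # replicate (m-1-i) LA)"
        have hu: "foldl (deltaM m) 0 (rev u) = i" using hit[OF m i] by (simp add: u_def)
        have "i \<in> S1 \<longleftrightarrow> 0 \<in> P m (wd S1 @ u)" using P_append[OF m] hu wdP[OF S1] by simp
        also have "\<dots> \<longleftrightarrow> foldl (delta A) (f S1) u \<in> finals A"
          using acc by (simp add: f_def delta_hat_def)
        also have "\<dots> \<longleftrightarrow> 0 \<in> P m (wd S2 @ u)"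
          using acc eq by (simp add: f_def delta_hat_def)
        also have "\<dots> \<longleftrightarrow> i \<in> S2" using P_append[OF m] hu wdP[OF S2] by simp
        finally show ?thesis .
      qed
      then show "S1 = S2" using S1 S2 by (auto simp: U_def)
    qed
    then have "card U \<le> card (states A)" using card_inj_on_le[OF _ fS fin] by simp
    then show "2 ^ m \<le> card (states A)" by (simp add: U_def card_Pow)
  qed
qed

end
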